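(* Assume $B_{r,s}(\delta)$ is semisimple. If $\lambda,\mu\in\Lambda_{r,s}$ with $\lambda\ne\mu$, then there is a supersymmetric polynomial $p\in S_{r,s}[x;y]$ with $p\big(c(\lambda,1),\dots,c(\lambda,r+s)\big)\ne p\big(c(\mu,1),\dots,c(\mu,r+s)\big)$.
   Context: $B_{r,s}(\delta)$ is the walled Brauer algebra ($r,s\ge0$, $\delta\in\mathbb C$). It is known to be semisimple iff one of: $r=0$ or $s=0$; $\delta\notin\mathbb Z$; $|\delta|>r+s-2$; $\delta=0$ and $(r,s)\in\{(1,2),(1,3),(2,1),(3,1)\}$. A supersymmetric polynomial $p\in\mathbb C[x_1,\dots,x_r,y_1,\dots,y_s]$ is one symmetric in the $x$'s and separately in the $y$'s such that setting $x_r=-y_1=t$ yields a polynomial independent of $t$; $S_{r,s}[x;y]$ is the algebra of these; evaluation at $(a_1,\dots,a_{r+s})$ means $x_i=a_i$, $y_j=a_{r+j}$. $\Lambda^t_{r,s}$ is the set of pairs of partitions $(\lambda^L,\lambda^R)$ with $|\lambda^L|=r-t$, $|\lambda^R|=s-t$, and $\Lambda_{r,s}=\bigsqcup_{t=0}^{\min(r,s)}\Lambda^t_{r,s}$. For a partition $\nu$ and $1\le i\le|\nu|$, $\mathrm{cont}(\nu,i)$ is $b-a$ where $(a,b)$ (row, column) is the position of the box containing $i$ in the tableau filling the Young diagram of $\nu$ with $1,\dots,|\nu|$ in order left to right along successive rows. For $\lambda\in\Lambda^t_{r,s}$: $c(\lambda,i)=\mathrm{cont}(\lambda^L,i)$ for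 $1\le i\le r-t$; $c(\lambda,i)=0$ for $r-t<i\le r+t$; $c(\lambda,i)=\mathrm{cont}(\lambda^R,i-r-t)+\delta$ for $r+t<i\le r+s$. *)

theory Defs
  imports Complex_Main "HOL-Library.Poly_Mapping" "HOL-Combinatorics.Permutations"
begin

(* Multivariate polynomials over C in variables z_0, z_1, ... :
   finitely supported maps from monomials (exponent vectors) to coefficients. *)
type_synonym mpoly = "(nat \<Rightarrow>\<^sub>0 nat) \<Rightarrow>\<^sub>0 complex"

definition mpoly_eval :: "mpoly \<Rightarrow> (nat \<Rightarrow> complex) \<Rightarrow> complex" where
  "mpoly_eval p a = (\<Sum>m\<in>Poly_Mapping.keys p.
      Poly_Mapping.lookup p m * (\<Prod>i\<in>Poly_Mapping.keys m. a i ^ Poly_Mapping.lookup m i))"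

definition mpoly_vars_in :: "nat \<Rightarrow> mpoly \<Rightarrow> bool" where
  "mpoly_vars_in n p \<longleftrightarrow> (\<forall>m\<in>Poly_Mapping.keys p. Poly_Mapping.keys m \<subseteq> {..<n})"

(* Variables: x_i = z_(i-1) for 1<=i<=r,  y_j = z_(r+j-1) for 1<=j<=s.
   Evaluation at (a_1,...,a_(r+s)) is mpoly_eval p (\<lambda>k. a_(k+1)). *)
definition supersymmetric :: "nat \<Rightarrow> nat \<Rightarrow> mpoly \<Rightarrow> bool" where
  "supersymmetric r s p \<longleftrightarrow>
     mpoly_vars_in (r + s) p \<and>
     (\<forall>\<sigma> a. \<sigma> permutes {..<r} \<longrightarrow> mpoly_eval p (a \<circ> \<sigma>) = mpoly_eval p a) \<and>
     (\<forall>\<sigma> a. \<sigma> permutes {r..<r+s} \<longrightarrow> mpoly_eval p (a \<circ> \<sigma>) = mpoly_eval p a) \<and>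
     (0 < r \<and> 0 < s \<longrightarrow>
        (\<forall>a t. mpoly_eval p (a(r - 1 := t, r := - t)) = mpoly_eval p (a(r - 1 := 0, r := 0))))"

definition is_partition :: "nat list \<Rightarrow> nat \<Rightarrow> bool" where
  "is_partition \<nu> n \<longleftrightarrow> sorted_wrt (\<ge>) \<nu> \<and> (\<forall>k\<in>set \<nu>. 0 < k) \<and> sum_list \<nu> = n"

definition Lambda :: "nat \<Rightarrow> nat \<Rightarrow> (nat list \<times> nat list) set" where
  "Lambda r s = {(lL, lR). \<exists>t\<le>min r s. is_partition lL (r - t) \<and> is_partition lR (s - t)}"

(* content of box containing i in row-reading tableau; a = current row index (1-based) *)
fun cont_aux :: "nat \<Rightarrow> nat list \<Rightarrow> nat \<Rightarrow> int" where
  "cont_aux a [] i = 0"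
| "cont_aux a (l # ls) i = (if i \<le> l then int i - int a else cont_aux (Suc a) ls (i - l))"

definition cont :: "nat list \<Rightarrow> nat \<Rightarrow> int" where
  "cont \<nu> i = cont_aux 1 \<nu> i"

definition cval :: "complex \<Rightarrow> nat \<Rightarrow> nat \<Rightarrow> nat list \<times> nat list \<Rightarrow> nat \<Rightarrow> complex" where
  "cval \<delta> r s lam i =
     (let t = r - sum_list (fst lam) in
      if 1 \<le> i \<and> i \<le> r - t then of_int (cont (fst lam) i)
      else if r - t < i \<and> i \<le> r + t then 0
      else of_int (cont (snd lam) (i - r - t)) + \<delta>)"

(* Semisimplicity of the walled Brauer algebra B_{r,s}(delta), via the known criterion *)
definition wba_semisimple :: "nat \<Rightarrow> nat \<Rightarrow> complex \<Rightarrow> bool" where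
  "wba_semisimple r s \<delta> \<longleftrightarrow>
     r = 0 \<or> s = 0 \<or> \<delta> \<notin> \<int> \<or> cmod \<delta> > real (r + s) - 2 \<or>
     (\<delta> = 0 \<and> (r, s) \<in> {(1,2),(1,3),(2,1),(3,1)})"

end

theory Submission imports Defs "HOL-Library.Multiset" "HOL-Computational_Algebra.Polynomial" begin

definition mono_eval :: "(nat \<Rightarrow>\<^sub>0 nat) \<Rightarrow> (nat \<Rightarrow> complex) \<Rightarrow> complex" where
 "mono_eval m a = (\<Prod>i\<in>Poly_Mapping.keys m. a i ^ Poly_Mapping.lookup m i)"

lemma eval_superset:
  "finite S \<Longrightarrow> Poly_Mapping.keys p \<subseteq> S \<Longrightarrow>
   mpoly_eval p a = (\<Sum>m\<in>S. Poly_Mapping.lookup p m * mono_eval m a)"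
  unfolding mpoly_eval_def mono_eval_def
  by (rule sum.mono_neutral_left) (auto simp: in_keys_iff)

lemma eval_add: "mpoly_eval (p + q) a = mpoly_eval p a + mpoly_eval q a"
proof -
  let ?S = "Poly_Mapping.keys p \<union> Poly_Mapping.keys q"
  have f: "finite ?S" by simp
  show ?thesis
    using eval_superset[OF f, of "p+q" a] eval_superset[OF f, of p a] eval_superset[OF f, of q a]
      keys_add[of p q]
    by (simp add: lookup_add sum.distrib distrib_right)
qed

lemma eval_zero: "mpoly_eval 0 a = 0"
  by (simp add: mpoly_eval_def)

lemma eval_sum: "finite I \<Longrightarrow> mpoly_eval (\<Sum>i\<in>I. f i) a = (\<Sum>i\<in>I. mpoly_eval (f i) a)"
  by (induction I rule: finite_induct) (simp_all add: eval_zero eval_add)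

lemma eval_single: "mpoly_eval (Poly_Mapping.single m c) a = c * mono_eval m a"
  using eval_superset[of "{m}" "Poly_Mapping.single m c" a] by auto

lemma mono_single: "mono_eval (Poly_Mapping.single k n) a = a k ^ n"
  by (simp add: mono_eval_def)

definition univ :: "complex poly \<Rightarrow> nat \<Rightarrow> mpoly" where
  "univ Q k = (\<Sum>n\<le>degree Q. Poly_Mapping.single (Poly_Mapping.single k n) (coeff Q n))"

lemma eval_univ: "mpoly_eval (univ Q k) a = poly Q (a k)"
  by (simp add: univ_def eval_sum eval_single mono_single poly_altdef)

lemma keys_univ: "m \<in> Poly_Mapping.keys (univ Q k) \<Longrightarrow> Poly_Mapping.keys m \<subseteq> {k}"
  unfolding univ_def using keys_sum by (fastforce split: if_splits)

definition F :: "complex poly \<Rightarrow> nat \<Rightarrow> nat \<Rightarrow> (nat \<Rightarrow> complex) \<Rightarrow> complex" where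
  "F Q r s a = (\<Sum>i<r. poly Q (a i)) - (\<Sum>j<s. poly Q (- a (r+j)))"

definition PP :: "complex poly \<Rightarrow> nat \<Rightarrow> nat \<Rightarrow> mpoly" where
  "PP Q r s = (\<Sum>i<r. univ Q i) + (\<Sum>j<s. univ (- pcompose Q [:0,-1:]) (r+j))"

lemma eval_PP: "mpoly_eval (PP Q r s) a = F Q r s a"
  unfolding PP_def F_def eval_add
  by (simp add: eval_sum eval_univ poly_pcompose sum_negf)

lemma keys_sum_sub: "(\<And>i. i \<in> I \<Longrightarrow> Poly_Mapping.keys (f i) \<subseteq> K) \<Longrightarrow> Poly_Mapping.keys (\<Sum>i\<in>I. f i) \<subseteq> K"
  by (rule order.trans[OF keys_sum], rule UN_least)

lemma keys_univ_sub: assumes "k < n" shows "Poly_Mapping.keys (univ Q k) \<subseteq> {m. Poly_Mapping.keys m \<subseteq> {..<n}}"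
proof (rule subsetI)
  fix m assume "m \<in> Poly_Mapping.keys (univ Q k)"
  then have "Poly_Mapping.keys m \<subseteq> {k}" by (rule keys_univ)
  with assms show "m \<in> {m. Poly_Mapping.keys m \<subseteq> {..<n}}" by auto
qed

lemma vars_PP: "mpoly_vars_in (r+s) (PP Q r s)"
proof -
  let ?K = "{m. Poly_Mapping.keys m \<subseteq> {..<r+s}}"
  have 1: "Poly_Mapping.keys (\<Sum>i<r. univ Q i) \<subseteq> ?K"
    by (rule keys_sum_sub, rule keys_univ_sub) simp
  have 2: "Poly_Mapping.keys (\<Sum>j<s. univ (- pcompose Q [:0,-1:]) (r+j)) \<subseteq> ?K"
    by (rule keys_sum_sub, rule keys_univ_sub) simp
  have "Poly_Mapping.keys (PP Q r s) \<subseteq> ?K"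
    unfolding PP_def by (rule order.trans[OF keys_add]) (use 1 2 in blast)
  then show ?thesis unfolding mpoly_vars_in_def by auto
qed

lemma F_perm1: assumes "\<sigma> permutes {..<r}" shows "F Q r s (a \<circ> \<sigma>) = F Q r s a"
proof -
  have "(\<Sum>i<r. poly Q (a (\<sigma> i))) = (\<Sum>i<r. poly Q (a i))"
    using sum.permute[OF assms, of "\<lambda>i. poly Q (a i)"] by (simp add: comp_def)
  moreover have "\<sigma> (r+j) = r+j" for j using permutes_not_in[OF assms] by auto
  ultimately show ?thesis by (simp add: F_def)
qed

lemma F_perm2: assumes "\<sigma> permutes {r..<r+s}" shows "F Q r s (a \<circ> \<sigma>) = F Q r s a"
proof -
  have sh: "(\<Sum>j<s. g (r+j)) = (\<Sum>k\<in>{r..<r+s}. g k)" for g :: "nat \<Rightarrow> complex"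
    by (rule sum.reindex_bij_witness[of _ "\<lambda>k. k - r" "\<lambda>j. r + j"]) auto
  have "(\<Sum>k\<in>{r..<r+s}. poly Q (- a (\<sigma> k))) = (\<Sum>k\<in>{r..<r+s}. poly Q (- a k))"
    using sum.permute[OF assms, of "\<lambda>k. poly Q (- a k)"] by (simp add: comp_def)
  moreover have "\<sigma> i = i" if "i < r" for i using permutes_not_in[OF assms] that by auto
  ultimately show ?thesis
    using sh[of "\<lambda>k. poly Q (- a (\<sigma> k))"] sh[of "\<lambda>k. poly Q (- a k)"] by (simp add: F_def)
qed

lemma F_split: assumes "0 < r" "0 < s"
  shows "F Q r s b = (\<Sum>i<r-1. poly Q (b i)) + poly Q (b (r-1)) - poly Q (- b r)
      - (\<Sum>j\<in>{1..<s}. poly Q (- b (r+j)))"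
proof -
  have "{..<r} = insert (r-1) {..<r-1}" using assms by auto
  then have 1: "(\<Sum>i<r. poly Q (b i)) = poly Q (b (r-1)) + (\<Sum>i<r-1. poly Q (b i))" by simp
  have "{..<s} = insert 0 {1..<s}" using assms by auto
  then have 2: "(\<Sum>j<s. poly Q (- b (r+j))) = poly Q (- b r) + (\<Sum>j\<in>{1..<s}. poly Q (- b (r+j)))"
    by simp
  show ?thesis by (simp add: F_def 1 2)
qed

lemma F_cancel: assumes "0 < r" "0 < s"
  shows "F Q r s (a(r - 1 := t, r := - t)) = F Q r s (a(r - 1 := 0, r := 0))"
proof -
  have A: "(\<Sum>i<r-1. poly Q ((a(r - 1 := x, r := y)) i)) = (\<Sum>i<r-1. poly Q (a i))" for x y
    by (rule sum.cong) auto
  have B: "(\<Sum>j\<in>{1..<s}. poly Q (- (a(r - 1 := x, r := y)) (r+j))) = (\<Sum>j\<in>{1..<s}. poly Q (- a (r+j)))" for x y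
    by (rule sum.cong) auto
  show ?thesis unfolding F_split[OF assms] A B using assms by auto
qed

lemma super_PP: "supersymmetric r s (PP Q r s)"
  unfolding supersymmetric_def eval_PP using vars_PP F_perm1 F_perm2 F_cancel by blast


declare upt_Suc[simp del]

definition contsA :: "nat \<Rightarrow> nat list \<Rightarrow> int list" where
  "contsA a ls = map (cont_aux a ls) [1..<sum_list ls + 1]"

lemma contsA_nil[simp]: "contsA a [] = []"
  by (simp add: contsA_def)

lemma contsA_cons: "contsA a (l#ls) = map (\<lambda>i. int i - int a) [1..<l+1] @ contsA (Suc a) ls"
proof (rule nth_equalityI)
  show "length (contsA a (l#ls)) = length (map (\<lambda>i. int i - int a) [1..<l+1] @ contsA (Suc a) ls)"
    by (cases "sum_list ls") (auto simp: contsA_def)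
next
  fix k assume "k < length (contsA a (l#ls))"
  then have k: "k < l + sum_list ls" by (simp add: contsA_def)
  show "contsA a (l#ls) ! k = (map (\<lambda>i. int i - int a) [1..<l+1] @ contsA (Suc a) ls) ! k"
  proof (cases "k < l")
    case True then show ?thesis using k by (simp add: contsA_def nth_append)
  next
    case False
    then have "Suc k - l = Suc (k - l)" by simp
    with False k show ?thesis by (simp add: contsA_def nth_append)
  qed
qed

lemma contsA_upper: "(\<forall>k\<in>set ls. k \<le> M) \<Longrightarrow> x \<in> set (contsA a ls) \<Longrightarrow> x \<le> int M - int a"
proof (induction ls arbitrary: a)
  case Nil then show ?case by simp
next
  case (Cons l ls)
  show ?case
  proof (cases "x \<in> set (contsA (Suc a) ls)")
    case True then show ?thesis using Cons.IH[of "Suc a"] Cons.prems by force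
  next
    case False
    then show ?thesis using Cons.prems by (auto simp: contsA_cons)
  qed
qed

lemma contsA_bounds: "(\<forall>k\<in>set ls. 0 < k) \<Longrightarrow> 1 \<le> a \<Longrightarrow> x \<in> set (contsA a ls) \<Longrightarrow>
   2 - int (sum_list ls) - int a \<le> x \<and> x \<le> int (sum_list ls) - int a"
proof (induction ls arbitrary: a)
  case Nil then show ?case by simp
next
  case (Cons l ls)
  show ?case
  proof (cases "x \<in> set (contsA (Suc a) ls)")
    case True then show ?thesis using Cons.IH[of "Suc a"] Cons.prems by force
  next
    case False
    then show ?thesis using Cons.prems by (auto simp: contsA_cons)
  qed
qed

lemma contsA_unique:
  "sorted_wrt (\<ge>) \<nu> \<Longrightarrow> (\<forall>k\<in>set \<nu>. 0 < k) \<Longrightarrow> sorted_wrt (\<ge>) \<nu>' \<Longrightarrow> (\<forall>k\<in>set \<nu>'. 0 < k) \<Longrightarrow>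
   mset (contsA a \<nu>) = mset (contsA a \<nu>') \<Longrightarrow> \<nu> = \<nu>'"
proof (induction \<nu> arbitrary: \<nu>' a)
  case Nil
  show ?case
  proof (cases \<nu>')
    case (Cons l' ls')
    then have "l' \<ge> 1" using Nil by auto
    then have "contsA a \<nu>' \<noteq> []" using Cons by (simp add: contsA_cons)
    then show ?thesis using Nil by simp
  qed simp
next
  case (Cons l ls)
  show ?case
  proof (cases "\<nu>' = []")
    case True
    have "l \<ge> 1" using Cons by auto
    then have "contsA a (l#ls) \<noteq> []" by (simp add: contsA_cons)
    then show ?thesis using Cons.prems True by simp
  next
    case False
    then obtain l' ls' where Cons2: "\<nu>' = l'#ls'" by (cases \<nu>') auto
    have l1: "l \<ge> 1" "l' \<ge> 1" using Cons.prems Cons2 by auto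
    have ub1: "\<forall>k\<in>set (l#ls). k \<le> l" using Cons.prems by auto
    have ub2: "\<forall>k\<in>set (l'#ls'). k \<le> l'" using Cons.prems Cons2 by auto
    have m1: "int l - int a \<in> set (contsA a (l#ls))" using l1 by (force simp: contsA_cons)
    have m2: "int l' - int a \<in> set (contsA a (l'#ls'))" using l1 by (force simp: contsA_cons)
    have e: "set (contsA a (l#ls)) = set (contsA a (l'#ls'))"
      using Cons.prems(5) Cons2 by (metis set_mset_mset)
    have "int l - int a \<le> int l' - int a" using contsA_upper[OF ub2] m1 e by blast
    moreover have "int l' - int a \<le> int l - int a" using contsA_upper[OF ub1] m2 e by blast
    ultimately have ll: "l = l'" by simp
    have "mset (contsA (Suc a) ls) = mset (contsA (Suc a) ls')"
      using Cons.prems(5) Cons2 ll by (simp add: contsA_cons)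
    then have "ls = ls'" using Cons.IH Cons.prems Cons2 by auto
    then show ?thesis using ll Cons2 by simp
  qed
qed


lemma count_map_inj: "inj f \<Longrightarrow> count (mset (map f xs)) (f x) = count (mset xs) x"
  by (induction xs) (simp_all add: inj_eq)

lemma mset_map_inj: "inj f \<Longrightarrow> mset (map f xs) = mset (map f ys) \<Longrightarrow> mset xs = mset ys"
proof (rule multiset_eqI)
  fix x assume "inj f" "mset (map f xs) = mset (map f ys)"
  then show "count (mset xs) x = count (mset ys) x" using count_map_inj[of f] by metis
qed

lemma zero_count:
  assumes "is_partition \<nu> n" "1 \<le> n" "n \<le> 3"
  shows "count (mset (contsA 1 \<nu>)) 0 = 1"
proof -
  obtain l ls where nu: "\<nu> = l#ls" using assms unfolding is_partition_def by (cases \<nu>) auto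
  have l1: "l \<ge> 1" using assms nu unfolding is_partition_def by auto
  have sl: "l + sum_list ls \<le> 3" using assms nu unfolding is_partition_def by auto
  have ub: "\<forall>k\<in>set ls. k \<le> 1"
  proof
    fix k assume k: "k \<in> set ls"
    then have "k \<le> l" using assms nu unfolding is_partition_def by auto
    moreover have "k \<le> sum_list ls" using k member_le_sum_list by blast
    ultimately show "k \<le> 1" using sl by linarith
  qed
  have z2: "0 \<notin> set (contsA 2 ls)" using contsA_upper[OF ub, of _ 2] by force
  have "[1..<l+1] = 1 # [2..<l+1]" using l1 by (simp add: upt_conv_Cons numeral_2_eq_2)
  then have "map (\<lambda>i. int i - int 1) [1..<l+1] = 0 # map (\<lambda>i. int i - 1) [2..<l+1]" by simp
  moreover have "0 \<notin> set (map (\<lambda>i. int i - 1) [2..<l+1])" by auto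
  ultimately show ?thesis using z2 by (simp add: nu contsA_cons numeral_2_eq_2 count_eq_zero_iff)
qed


definition Xl :: "complex \<Rightarrow> nat \<Rightarrow> nat \<Rightarrow> nat list \<times> nat list \<Rightarrow> complex list" where
  "Xl \<delta> r s lam = map (\<lambda>i. cval \<delta> r s lam (Suc i)) [0..<r]"
definition Yl :: "complex \<Rightarrow> nat \<Rightarrow> nat \<Rightarrow> nat list \<times> nat list \<Rightarrow> complex list" where
  "Yl \<delta> r s lam = map (\<lambda>j. - cval \<delta> r s lam (Suc (r+j))) [0..<s]"

lemma X_decomp:
  assumes "sum_list lL = r - t" "t \<le> r"
  shows "Xl \<delta> r s (lL,lR) = map of_int (contsA 1 lL) @ replicate t 0"
proof (rule nth_equalityI)
  show "length (Xl \<delta> r s (lL,lR)) = length (map of_int (contsA 1 lL) @ replicate t (0::complex))"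
    using assms by (simp add: Xl_def contsA_def)
next
  fix i assume "i < length (Xl \<delta> r s (lL,lR))"
  then have i: "i < r" by (simp add: Xl_def)
  have tt: "r - sum_list lL = t" using assms by simp
  show "Xl \<delta> r s (lL,lR) ! i = (map of_int (contsA 1 lL) @ replicate t 0) ! i"
  proof (cases "i < r - t")
    case True then show ?thesis using i assms
      by (simp add: Xl_def contsA_def nth_append cval_def tt cont_def Let_def)
  next
    case False then show ?thesis using i assms
      by (simp add: Xl_def contsA_def nth_append cval_def tt Let_def)
  qed
qed

lemma Y_decomp:
  assumes "sum_list lL = r - t" "sum_list lR = s - t" "t \<le> r" "t \<le> s"
  shows "Yl \<delta> r s (lL,lR) = replicate t 0 @ map (\<lambda>c. - (of_int c + \<delta>)) (contsA 1 lR)"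
proof (rule nth_equalityI)
  show "length (Yl \<delta> r s (lL,lR)) = length (replicate t 0 @ map (\<lambda>c. - (of_int c + \<delta>)) (contsA 1 lR))"
    using assms by (simp add: Yl_def contsA_def)
next
  fix j assume "j < length (Yl \<delta> r s (lL,lR))"
  then have j: "j < s" by (simp add: Yl_def)
  have tt: "r - sum_list lL = t" using assms by simp
  show "Yl \<delta> r s (lL,lR) ! j = (replicate t 0 @ map (\<lambda>c. - (of_int c + \<delta>)) (contsA 1 lR)) ! j"
  proof (cases "j < t")
    case True then show ?thesis using j assms
      by (simp add: Yl_def contsA_def nth_append cval_def tt Let_def)
  next
    case False
    then have "Suc (r + j) - r - t = Suc (j - t)" "\<not> Suc (r+j) \<le> r - t" by auto
    with False show ?thesis using j assms
      by (simp add: Yl_def contsA_def nth_append cval_def tt cont_def Let_def)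
  qed
qed


lemma sep_Q:
  assumes "(A::complex multiset) \<noteq> B"
  shows "\<exists>Q. sum_mset (image_mset (poly Q) A) \<noteq> sum_mset (image_mset (poly Q) B)"
proof -
  obtain v where v: "count A v \<noteq> count B v" using assms by (meson multiset_eqI)
  define W where "W = (set_mset A \<union> set_mset B) - {v}"
  define Q where "Q = (\<Prod>w\<in>W. [:-w, 1:])"
  have fW: "finite W" by (simp add: W_def)
  have pQ: "poly Q x = (\<Prod>w\<in>W. x - w)" for x by (simp add: Q_def poly_prod)
  have Qv: "poly Q v \<noteq> 0" using fW by (simp add: pQ W_def)
  have red: "sum_mset (image_mset (poly Q) M) = poly Q v * of_nat (count M v)"
    if "set_mset M \<subseteq> set_mset A \<union> set_mset B" for M
  proof -
    have "image_mset (poly Q) M = image_mset (\<lambda>x. if x = v then poly Q v else 0) M"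
    proof (rule image_mset_cong)
      fix x assume "x \<in># M"
      then have "x = v \<or> x \<in> W" using that by (auto simp: W_def)
      then show "poly Q x = (if x = v then poly Q v else 0)"
        using fW by (auto simp: pQ)
    qed
    then show ?thesis by (simp add: sum_mset_delta)
  qed
  have "sum_mset (image_mset (poly Q) A) \<noteq> sum_mset (image_mset (poly Q) B)"
    using red[of A] red[of B] Qv v by simp
  then show ?thesis by blast
qed

lemma F_lists: "F Q r s (\<lambda>k. cval \<delta> r s lam (Suc k)) =
   sum_list (map (poly Q) (Xl \<delta> r s lam)) - sum_list (map (poly Q) (Yl \<delta> r s lam))"
proof -
  have 1: "(\<Sum>i<r. f i) = sum_list (map f [0..<r])" for f :: "nat \<Rightarrow> complex" and r
    using sum_set_upt_conv_sum_list_nat[of f 0 r] by (simp add: atLeast_upt)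
  show ?thesis unfolding F_def Xl_def Yl_def 1 by (simp add: comp_def)
qed

lemma reduction:
  assumes "mset (Xl \<delta> r s lam) + mset (Yl \<delta> r s mu) \<noteq> mset (Xl \<delta> r s mu) + mset (Yl \<delta> r s lam)"
  shows "\<exists>p. supersymmetric r s p \<and>
           mpoly_eval p (\<lambda>k. cval \<delta> r s lam (Suc k)) \<noteq> mpoly_eval p (\<lambda>k. cval \<delta> r s mu (Suc k))"
proof -
  obtain Q where Q: "sum_mset (image_mset (poly Q) (mset (Xl \<delta> r s lam) + mset (Yl \<delta> r s mu))) \<noteq>
     sum_mset (image_mset (poly Q) (mset (Xl \<delta> r s mu) + mset (Yl \<delta> r s lam)))"
    using sep_Q[OF assms] by blast
  have sl: "sum_mset (image_mset (poly Q) (mset xs)) = sum_list (map (poly Q) xs)" for xs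
    by (induction xs) auto
  have "mpoly_eval (PP Q r s) (\<lambda>k. cval \<delta> r s lam (Suc k)) \<noteq> mpoly_eval (PP Q r s) (\<lambda>k. cval \<delta> r s mu (Suc k))"
  proof
    assume "mpoly_eval (PP Q r s) (\<lambda>k. cval \<delta> r s lam (Suc k)) = mpoly_eval (PP Q r s) (\<lambda>k. cval \<delta> r s mu (Suc k))"
    then have "sum_list (map (poly Q) (Xl \<delta> r s lam)) - sum_list (map (poly Q) (Yl \<delta> r s lam)) =
       sum_list (map (poly Q) (Xl \<delta> r s mu)) - sum_list (map (poly Q) (Yl \<delta> r s mu))"
      by (simp add: eval_PP F_lists)
    then have "sum_list (map (poly Q) (Xl \<delta> r s lam)) + sum_list (map (poly Q) (Yl \<delta> r s mu)) =
       sum_list (map (poly Q) (Xl \<delta> r s mu)) + sum_list (map (poly Q) (Yl \<delta> r s lam))"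
      by (simp add: algebra_simps)
    with Q show False by (simp add: sl)
  qed
  then show ?thesis using super_PP by blast
qed


definition CL :: "nat list \<Rightarrow> complex multiset" where
  "CL l = mset (map of_int (contsA 1 l))"
definition DR :: "complex \<Rightarrow> nat list \<Rightarrow> complex multiset" where
  "DR \<delta> l = mset (map (\<lambda>c. - (of_int c + \<delta>)) (contsA 1 l))"

lemma cancel_step:
  assumes "sum_list lL = r - t" "sum_list lR = s - t" "t \<le> r" "t \<le> s"
    and "sum_list mL = r - u" "sum_list mR = s - u" "u \<le> r" "u \<le> s"
    and "mset (Xl \<delta> r s (lL,lR)) + mset (Yl \<delta> r s (mL,mR)) = mset (Xl \<delta> r s (mL,mR)) + mset (Yl \<delta> r s (lL,lR))"
  shows "CL lL + DR \<delta> mR = CL mL + DR \<delta> lR"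
proof -
  have "CL lL + replicate_mset t 0 + (replicate_mset u 0 + DR \<delta> mR) =
        CL mL + replicate_mset u 0 + (replicate_mset t 0 + DR \<delta> lR)"
    using assms(9) unfolding X_decomp[OF assms(1,3)] X_decomp[OF assms(5,7)]
      Y_decomp[OF assms(1-4)] Y_decomp[OF assms(5-8)] CL_def DR_def by simp
  then have "(CL lL + DR \<delta> mR) + (replicate_mset t 0 + replicate_mset u 0) =
        (CL mL + DR \<delta> lR) + (replicate_mset t 0 + replicate_mset u 0)"
    by (simp add: ac_simps)
  then show ?thesis by (rule add_right_imp_eq)
qed

lemma filter_all: "(\<forall>x\<in>set xs. P x) \<Longrightarrow> filter_mset P (mset xs) = mset xs"
proof -
  assume a: "\<forall>x\<in>set xs. P x"
  have "filter_mset P (mset xs) = mset (filter P xs)" by simp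
  also have "filter P xs = xs" using a by simp
  finally show ?thesis .
qed

lemma filter_none: "(\<forall>x\<in>set xs. \<not> P x) \<Longrightarrow> filter_mset P (mset xs) = {#}"
proof -
  assume a: "\<forall>x\<in>set xs. \<not> P x"
  have "filter_mset P (mset xs) = mset (filter P xs)" by simp
  also have "filter P xs = []" using a by (simp add: filter_empty_conv)
  finally show ?thesis by simp
qed

lemma inj_of_int_c: "inj (of_int :: int \<Rightarrow> complex)"
  by (auto simp: inj_def)

lemma inj_g: "inj (\<lambda>c. - (of_int c + (\<delta>::complex)))"
  by (auto simp: inj_def)

lemma CL_eq: "is_partition l n \<Longrightarrow> is_partition l' n' \<Longrightarrow> CL l = CL l' \<Longrightarrow> l = l'"
proof -
  assume a: "is_partition l n" "is_partition l' n'" "CL l = CL l'"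
  have "mset (contsA 1 l) = mset (contsA 1 l')"
    by (rule mset_map_inj[OF inj_of_int_c]) (use a(3) in \<open>simp only: CL_def\<close>)
  then show "l = l'" using a(1,2) unfolding is_partition_def by (intro contsA_unique) auto
qed

lemma DR_eq: "is_partition l n \<Longrightarrow> is_partition l' n' \<Longrightarrow> DR \<delta> l = DR \<delta> l' \<Longrightarrow> l = l'"
proof -
  assume a: "is_partition l n" "is_partition l' n'" "DR \<delta> l = DR \<delta> l'"
  have "mset (contsA 1 l) = mset (contsA 1 l')"
    by (rule mset_map_inj[OF inj_g]) (use a(3) in \<open>simp only: DR_def\<close>)
  then show "l = l'" using a(1,2) unfolding is_partition_def by (intro contsA_unique) auto
qed

lemma cont_abs: "is_partition l n \<Longrightarrow> x \<in> set (contsA 1 l) \<Longrightarrow> \<bar>x\<bar> \<le> int n - 1 \<and> 1 \<le> n"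
  unfolding is_partition_def using contsA_bounds[of l 1 x] by auto

lemma generic_case:
  assumes ns: "r = 0 \<or> s = 0 \<or> \<delta> \<notin> \<int> \<or> cmod \<delta> > real (r + s) - 2"
    and pl: "is_partition lL nl" "nl \<le> r" "is_partition lR nr" "nr \<le> s"
    and pm: "is_partition mL ml" "ml \<le> r" "is_partition mR mr" "mr \<le> s"
    and eq: "CL lL + DR \<delta> mR = CL mL + DR \<delta> lR"
  shows "lL = mL \<and> lR = mR"
proof -
  define P where "P v = (v \<in> \<int> \<and> cmod v \<le> real r - 1)" for v :: complex
  have hCL: "\<forall>v\<in>set (map of_int (contsA 1 l)). P v" if "is_partition l n" "n \<le> r" for l n
  proof
    fix v :: complex assume "v \<in> set (map of_int (contsA 1 l))"
    then obtain x where x: "x \<in> set (contsA 1 l)" "v = of_int x" by auto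
    have "\<bar>x\<bar> \<le> int r - 1" using cont_abs[OF that(1) x(1)] that(2) by linarith
    then have "real_of_int \<bar>x\<bar> \<le> real_of_int (int r - 1)" by (simp only: of_int_le_iff)
    then show "P v" using x by (simp add: P_def)
  qed
  have hDR: "\<forall>v\<in>set (map (\<lambda>c. - (of_int c + \<delta>)) (contsA 1 l)). \<not> P v" if "is_partition l n" "n \<le> s" for l n
  proof
    fix v :: complex assume "v \<in> set (map (\<lambda>c. - (of_int c + \<delta>)) (contsA 1 l))"
    then obtain c where c: "c \<in> set (contsA 1 l)" "v = - (of_int c + \<delta>)" by auto
    have cb: "\<bar>c\<bar> \<le> int s - 1" "1 \<le> s" using cont_abs[OF that(1) c(1)] that(2) by linarith+
    show "\<not> P v"
    proof
      assume Pv: "P v"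
      have dv: "\<delta> = - v - of_int c" using c by simp
      consider "r = 0" | "s = 0" | "\<delta> \<notin> \<int>" | "cmod \<delta> > real (r + s) - 2" using ns by blast
      then show False
      proof cases
        case 1 then show False using Pv norm_ge_zero[of v] by (simp add: P_def)
      next
        case 2 then show False using cb by simp
      next
        case 3
        have "- v - of_int c \<in> \<int>" using Pv by (simp add: P_def)
        then show False using 3 dv by simp
      next
        case 4
        have "cmod \<delta> \<le> cmod v + cmod (of_int c :: complex)"
          unfolding dv using norm_triangle_ineq4[of "-v" "of_int c"] by simp
        moreover have "real_of_int \<bar>c\<bar> \<le> real_of_int (int s - 1)" using cb by (simp only: of_int_le_iff)
        ultimately show False using 4 Pv cb by (simp add: P_def)
      qed
    qed
  qed
  have a1: "filter_mset P (CL l) = CL l" "filter_mset (\<lambda>v. \<not> P v) (CL l) = {#}"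
    if "is_partition l n" "n \<le> r" for l n
    unfolding CL_def using filter_all[OF hCL[OF that]] filter_none[of _ "\<lambda>v. \<not> P v"] hCL[OF that]
    by auto
  have a2: "filter_mset P (DR \<delta> l) = {#}" "filter_mset (\<lambda>v. \<not> P v) (DR \<delta> l) = DR \<delta> l"
    if "is_partition l n" "n \<le> s" for l n
  proof -
    show "filter_mset P (DR \<delta> l) = {#}" unfolding DR_def by (rule filter_none[OF hDR[OF that]])
    show "filter_mset (\<lambda>v. \<not> P v) (DR \<delta> l) = DR \<delta> l" unfolding DR_def
      by (rule filter_all) (use hDR[OF that] in blast)
  qed
  have "filter_mset P (CL lL + DR \<delta> mR) = filter_mset P (CL mL + DR \<delta> lR)" using eq by simp
  then have "CL lL = CL mL"
    by (simp only: filter_union_mset a1(1)[OF pl(1,2)] a1(1)[OF pm(1,2)] a2(1)[OF pl(3,4)] a2(1)[OF pm(3,4)] add_0_right)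
  moreover have "filter_mset (\<lambda>v. \<not> P v) (CL lL + DR \<delta> mR) = filter_mset (\<lambda>v. \<not> P v) (CL mL + DR \<delta> lR)" using eq by simp
  then have "DR \<delta> mR = DR \<delta> lR"
    by (simp only: filter_union_mset a1(2)[OF pl(1,2)] a1(2)[OF pm(1,2)] a2(2)[OF pl(3,4)] a2(2)[OF pm(3,4)] add_0_left)
  ultimately show ?thesis using CL_eq[OF pl(1) pm(1)] DR_eq[OF pm(3) pl(3), of \<delta>] by simp
qed


lemma part_small: "is_partition l n \<Longrightarrow> n \<le> 1 \<Longrightarrow> l = (if n = 0 then [] else [1])"
proof (cases l)
  case Nil then show "is_partition l n \<Longrightarrow> n \<le> 1 \<Longrightarrow> ?thesis" by (simp add: is_partition_def)
next
  case (Cons a ls)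
  assume p: "is_partition l n" "n \<le> 1"
  then have a: "a \<ge> 1" "a + sum_list ls = n" "\<forall>k\<in>set ls. 0 < k" using Cons by (auto simp: is_partition_def)
  then have "a = 1" "n = 1" "sum_list ls = 0" using p by linarith+
  moreover have "ls = []"
  proof (rule ccontr)
    assume "ls \<noteq> []"
    then obtain k where "k \<in> set ls" by (cases ls) auto
    then have "0 < k" "k \<le> sum_list ls" using a(3) member_le_sum_list by auto
    then show False using \<open>sum_list ls = 0\<close> by simp
  qed
  ultimately show ?thesis using Cons by simp
qed

lemma z_val: "is_partition l n \<Longrightarrow> n \<le> 3 \<Longrightarrow> count (mset (contsA 1 l)) 0 = (if n = 0 then 0 else 1)"
proof (cases "n = 0")
  case True
  assume "is_partition l n"
  then have "l = []" using part_small[of l n] True by simp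
  then show ?thesis using True by simp
next
  case False
  assume "is_partition l n" "n \<le> 3"
  then show ?thesis using zero_count[of l n] False by simp
qed

lemma count_CL: "count (CL l) 0 = count (mset (contsA 1 l)) 0"
proof -
  have "count (CL l) (of_int 0) = count (mset (contsA 1 l)) 0"
    unfolding CL_def by (rule count_map_inj[OF inj_of_int_c])
  then show ?thesis by simp
qed

lemma count_DR: "count (DR 0 l) 0 = count (mset (contsA 1 l)) 0"
proof -
  have "count (DR 0 l) ((\<lambda>c. - (of_int c + (0::complex))) 0) = count (mset (contsA 1 l)) 0"
    unfolding DR_def by (rule count_map_inj[OF inj_g])
  then show ?thesis by simp
qed

lemma small_case:
  assumes rs: "(r,s) \<in> {(1,2),(1,3),(2,1),(3,1)}"
    and pl: "is_partition lL (r-t)" "is_partition lR (s-t)" "t \<le> min r s"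
    and pm: "is_partition mL (r-u)" "is_partition mR (s-u)" "u \<le> min r s"
    and eq: "CL lL + DR 0 mR = CL mL + DR 0 lR"
  shows "lL = mL \<and> lR = mR"
proof -
  have r3: "r \<le> 3" "s \<le> 3" using rs by auto
  have "count (CL lL + DR 0 mR) 0 = count (CL mL + DR 0 lR) 0" using eq by simp
  then have ce: "(if r - t = 0 then 0 else 1) + (if s - u = 0 then 0 else 1) =
      (if r - u = 0 then 0 else (1::nat)) + (if s - t = 0 then 0 else 1)"
    using z_val[OF pl(1)] z_val[OF pl(2)] z_val[OF pm(1)] z_val[OF pm(2)] r3
    by (simp add: count_CL count_DR)
  show ?thesis
  proof (cases "r = 1")
    case True
    then have s2: "s \<ge> 2" using rs by auto
    have tu: "t \<le> 1" "u \<le> 1" "s - u \<noteq> 0" "s - t \<noteq> 0" using pl(3) pm(3) True s2 by auto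
    have "t = u"
    proof (cases "t = 0"; cases "u = 0")
    qed (use ce tu True in simp_all)
    then have L: "lL = mL" using part_small[OF pl(1)] part_small[OF pm(1)] True by simp
    then have "DR 0 mR = DR 0 lR" using eq by simp
    then show ?thesis using L DR_eq[OF pm(2) pl(2), of 0] by simp
  next
    case False
    then have s1: "s = 1" "r \<ge> 2" using rs by auto
    have tu: "t \<le> 1" "u \<le> 1" "r - u \<noteq> 0" "r - t \<noteq> 0" using pl(3) pm(3) s1 by auto
    have "t = u"
    proof (cases "t = 0"; cases "u = 0")
    qed (use ce tu s1 in simp_all)
    then have R: "lR = mR" using part_small[OF pl(2)] part_small[OF pm(2)] s1 by simp
    then have "CL lL = CL mL" using eq by simp
    then show ?thesis using R CL_eq[OF pl(1) pm(1)] by simp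
  qed
qed


theorem mainTheorem6:
  fixes r s :: nat and \<delta> :: complex and lam mu :: "nat list \<times> nat list"
  assumes "wba_semisimple r s \<delta>"
    and "lam \<in> Lambda r s" and "mu \<in> Lambda r s" and "lam \<noteq> mu"
  shows "\<exists>p. supersymmetric r s p \<and>
           mpoly_eval p (\<lambda>k. cval \<delta> r s lam (Suc k)) \<noteq> mpoly_eval p (\<lambda>k. cval \<delta> r s mu (Suc k))"
proof (rule reduction, rule notI)
  obtain lL lR where lam: "lam = (lL,lR)" by (cases lam)
  obtain mL mR where mu: "mu = (mL,mR)" by (cases mu)
  obtain t where t: "t \<le> min r s" "is_partition lL (r-t)" "is_partition lR (s-t)"
    using assms(2) unfolding Lambda_def lam by auto
  obtain u where u: "u \<le> min r s" "is_partition mL (r-u)" "is_partition mR (s-u)"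
    using assms(3) unfolding Lambda_def mu by auto
  have st: "sum_list lL = r - t" "sum_list lR = s - t" "t \<le> r" "t \<le> s"
    using t unfolding is_partition_def by auto
  have su: "sum_list mL = r - u" "sum_list mR = s - u" "u \<le> r" "u \<le> s"
    using u unfolding is_partition_def by auto
  assume E: "mset (Xl \<delta> r s lam) + mset (Yl \<delta> r s mu) = mset (Xl \<delta> r s mu) + mset (Yl \<delta> r s lam)"
  have C: "CL lL + DR \<delta> mR = CL mL + DR \<delta> lR"
    using cancel_step[OF st su] E unfolding lam mu by blast
  have "lL = mL \<and> lR = mR"
  proof (cases "\<delta> = 0 \<and> (r, s) \<in> {(1,2),(1,3),(2,1),(3,1)}")
    case True
    then show ?thesis using small_case[of r s lL t lR mL u mR] t u C by simp
  next
    case False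
    then have ns: "r = 0 \<or> s = 0 \<or> \<delta> \<notin> \<int> \<or> cmod \<delta> > real (r + s) - 2"
      using assms(1) unfolding wba_semisimple_def by blast
    show ?thesis
      by (rule generic_case[OF ns t(2) _ t(3) _ u(2) _ u(3) _ C]) auto
  qed
  then show False using assms(4) lam mu by simp
qed

end
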